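(* Let $d\ge2$, $N\in\mathbb N$ and $\theta>0$. The $d$-types Moran model $\{k(t)\}_{t\ge0}$ with population size $N$ and symmetric parent-independent mutation at rate $\theta$ is self-dual with duality function $\bar D_N(k,\xi)=\prod_{i=1}^d\frac{k_i!}{(k_i-\xi_i)!}\frac{\Gamma(\frac{2\theta}{d-1})}{\Gamma(\xi_i+\frac{2\theta}{d-1})}$, where $k_d=N-\sum_{i=1}^{d-1}k_i$ and $\xi_d=N-\sum_{i=1}^{d-1}\xi_i$; that is, for all $k,\xi$ in the state space and all $t>0$, $\mathbb E_k\bar D_N(k(t),\xi)=\mathbb E_\xi\bar D_N(k,\xi(t))$, where $\{\xi(t)\}$ is a copy of the same Moran model.
   Context: $\mathbb N_0=\{0,1,2,\dots\}$, $e_i$ the $i$-th unit vector; $\frac{k!}{(k-\xi)!}$ is interpreted as $0$ when $\xi>k$. The state space is $\{k\in\mathbb N_0^{d-1}:\sum_jk_j\le N\}$ and the generator is $\mathscr L^{Mor}_{N,d,\theta}g(k)=\frac12\sum_{1\le i<j\le d-1}\big[k_i(k_j+\frac{2\theta}{d-1})(g(k-e_i+e_j)-g(k))+k_j(k_i+\frac{2\theta}{d-1})(g(k+e_i-e_j)-g(k))\big]+\frac12\sum_{i=1}^{d-1}\big[(N-\sum_{j=1}^{d-1}k_j)(k_i+\frac{2\theta}{d-1})(g(k+e_i)-g(k))+k_i(N-\sum_{j=1}^{d-1}k_j+\frac{2\theta}{d-1})(g(k-e_i)-g(k))\big]$. $\mathbb E_k$ denotes expectation for the process started at $k$. *)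

theory Defs
  imports "HOL-Analysis.Analysis"
begin

text \<open>States are functions k :: nat \<Rightarrow> nat, where k i for i in {1..d-1} are the
  counts k_1..k_(d-1) and k i = 0 for all other i.\<close>

definition moran_states :: "nat \<Rightarrow> nat \<Rightarrow> (nat \<Rightarrow> nat) set" where
  "moran_states d N = {k. (\<forall>i. i \<notin> {1..d-1} \<longrightarrow> k i = 0) \<and> (\<Sum>j\<in>{1..d-1}. k j) \<le> N}"

definition moran_gen :: "nat \<Rightarrow> nat \<Rightarrow> real \<Rightarrow> ((nat \<Rightarrow> nat) \<Rightarrow> real) \<Rightarrow> (nat \<Rightarrow> nat) \<Rightarrow> real" where
  "moran_gen d N \<theta> g k =
     (let c = 2 * \<theta> / real (d - 1);
          s = real (\<Sum>j\<in>{1..d-1}. k j)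
      in 1/2 * (\<Sum>i\<in>{1..d-1}. \<Sum>j\<in>{i+1..d-1}.
                 real (k i) * (real (k j) + c) * (g (k(i := k i - 1, j := k j + 1)) - g k)
               + real (k j) * (real (k i) + c) * (g (k(i := k i + 1, j := k j - 1)) - g k))
       + 1/2 * (\<Sum>i\<in>{1..d-1}.
                 (real N - s) * (real (k i) + c) * (g (k(i := k i + 1)) - g k)
               + real (k i) * (real N - s + c) * (g (k(i := k i - 1)) - g k)))"

text \<open>Expectation E_k g(k(t)) for the finite-state continuous-time Markov chain with
  generator L: the semigroup exp(tL) = \<Sum>n. t^n/n! L^n applied to g, evaluated at k.\<close>

definition moran_expect :: "nat \<Rightarrow> nat \<Rightarrow> real \<Rightarrow> real \<Rightarrow> ((nat \<Rightarrow> nat) \<Rightarrow> real) \<Rightarrow> (nat \<Rightarrow> nat) \<Rightarrow> real" where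
  "moran_expect d N \<theta> t g k = (\<Sum>n. t ^ n / fact n * ((moran_gen d N \<theta> ^^ n) g) k)"

text \<open>Falling factorial k!/(k-\<xi>)!, interpreted as 0 when \<xi> > k.\<close>

definition falling_ratio :: "nat \<Rightarrow> nat \<Rightarrow> real" where
  "falling_ratio a b = (if b \<le> a then fact a / fact (a - b) else 0)"

definition ext_state :: "nat \<Rightarrow> nat \<Rightarrow> (nat \<Rightarrow> nat) \<Rightarrow> nat \<Rightarrow> nat" where
  "ext_state d N k = k(d := N - (\<Sum>j\<in>{1..d-1}. k j))"

definition moran_dual :: "nat \<Rightarrow> nat \<Rightarrow> real \<Rightarrow> (nat \<Rightarrow> nat) \<Rightarrow> (nat \<Rightarrow> nat) \<Rightarrow> real" where
  "moran_dual d N \<theta> k \<xi> =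
     (let c = 2 * \<theta> / real (d - 1)
      in \<Prod>i\<in>{1..d}. falling_ratio (ext_state d N k i) (ext_state d N \<xi> i)
                      * Gamma c / Gamma (real (ext_state d N \<xi> i) + c))"

end

theory Submission
  imports Defs
begin

definition phi :: "real \<Rightarrow> nat \<Rightarrow> real" where
  "phi c n = fact n * Gamma c / Gamma (real n + c)"

lemma cancel_aux: "a \<noteq> 0 \<Longrightarrow> x / (a * b) * a = x / (b::real)"
  by (cases "b = 0") (auto simp: field_simps)

lemma phi_step:
  assumes "c > 0"
  shows "phi c (Suc m) * (real m + c) = real (Suc m) * phi c m"
proof -
  have pos: "real m + c > 0" using assms by simp
  hence nz: "real m + c \<notin> \<int>\<^sub>\<le>\<^sub>0" using nonpos_Ints_nonpos by fastforce
  have g: "Gamma (real (Suc m) + c) = (real m + c) * Gamma (real m + c)"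
    using Gamma_plus1[OF nz] by (simp add: algebra_simps)
  have gp: "Gamma (real m + c) \<noteq> 0" using Gamma_real_pos[OF pos] by simp
  have "phi c (Suc m) * (real m + c) = fact (Suc m) * Gamma c / ((real m + c) * Gamma (real m + c)) * (real m + c)"
    unfolding phi_def g by simp
  also have "\<dots> = fact (Suc m) * Gamma c / Gamma (real m + c)" by (rule cancel_aux) (use pos in simp)
  also have "\<dots> = real (Suc m) * phi c m" unfolding phi_def by (simp add: fact_Suc)
  finally show ?thesis .
qed

lemma sum_upd:
  assumes "finite A" "i \<in> A"
  shows "sum (f(i:=a)) A + f i = sum f A + (a::nat)"
proof -
  have "sum (f(i:=a)) A = a + sum (f(i:=a)) (A - {i})" using sum.remove[OF assms, of "f(i:=a)"] by simp
  moreover have "sum (f(i:=a)) (A - {i}) = sum f (A - {i})" by (rule sum.cong) auto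
  moreover have "sum f A = f i + sum f (A - {i})" using sum.remove[OF assms] by simp
  ultimately show ?thesis by simp
qed

lemma w_swap:
  assumes "finite A" "i \<in> A" "j \<in> A" "i \<noteq> j" "K' i + 1 = K i" "K' j = K j + 1"
    "\<forall>l\<in>A-{i,j}. K' l = K l" "c > 0"
  shows "real (K i) * (real (K j) + c) * (\<Prod>l\<in>A. phi c (K' l))
       = real (K' j) * (real (K' i) + c) * (\<Prod>l\<in>A. phi c (K l))"
proof -
  define R where "R = (\<Prod>l\<in>A-{i}-{j}. phi c (K l))"
  have jA: "j \<in> A - {i}" using assms by auto
  have fin: "finite (A - {i})" using assms by auto
  have R': "(\<Prod>l\<in>A-{i}-{j}. phi c (K' l)) = R" unfolding R_def
    by (rule prod.cong) (use assms in auto)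
  have P1: "(\<Prod>l\<in>A. phi c (K' l)) = phi c (K' i) * (phi c (K' j) * R)"
    using prod.remove[OF assms(1,2), of "\<lambda>l. phi c (K' l)"] prod.remove[OF fin jA, of "\<lambda>l. phi c (K' l)"] R' by simp
  have P2: "(\<Prod>l\<in>A. phi c (K l)) = phi c (K i) * (phi c (K j) * R)"
    using prod.remove[OF assms(1,2), of "\<lambda>l. phi c (K l)"] prod.remove[OF fin jA, of "\<lambda>l. phi c (K l)"] R_def by simp
  define m where "m = K' i"
  define n where "n = K j"
  have Ki: "K i = Suc m" using assms m_def by simp
  have Kj: "K' j = Suc n" using assms n_def by simp
  have e1: "phi c (Suc m) * (real m + c) = real (Suc m) * phi c m" by (rule phi_step[OF assms(8)])
  have e2: "phi c (Suc n) * (real n + c) = real (Suc n) * phi c n" by (rule phi_step[OF assms(8)])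
  have "real (K i) * (real (K j) + c) * (\<Prod>l\<in>A. phi c (K' l))
      = real (Suc m) * phi c m * R * (phi c (Suc n) * (real n + c))"
    unfolding P1 Ki by (simp add: m_def[symmetric] n_def[symmetric] Kj algebra_simps)
  also have "\<dots> = real (Suc m) * phi c m * R * (real (Suc n) * phi c n)" by (simp only: e2)
  also have "\<dots> = real (Suc n) * phi c n * R * (real (Suc m) * phi c m)" by (simp only: ac_simps)
  also have "\<dots> = real (Suc n) * phi c n * R * (phi c (Suc m) * (real m + c))" by (simp only: e1)
  also have "\<dots> = real (K' j) * (real (K' i) + c) * (\<Prod>l\<in>A. phi c (K l))"
    unfolding P2 Ki Kj by (simp add: m_def[symmetric] n_def[symmetric] algebra_simps)
  finally show ?thesis .
qed

definition ww :: "nat \<Rightarrow> nat \<Rightarrow> real \<Rightarrow> (nat \<Rightarrow> nat) \<Rightarrow> real" where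
  "ww d N c k = (\<Prod>i\<in>{1..d}. phi c (ext_state d N k i))"

lemma ms_iff: "k \<in> moran_states d N \<longleftrightarrow> (\<forall>i. i \<notin> {1..d-1} \<longrightarrow> k i = 0) \<and> sum k {1..d-1} \<le> N"
  by (simp add: moran_states_def)

lemma ext_low: "i \<in> {1..d-1} \<Longrightarrow> ext_state d N k i = k i"
  by (auto simp: ext_state_def)

lemma ext_d: "ext_state d N k d = N - sum k {1..d-1}"
  by (simp add: ext_state_def)

lemma ext_sum:
  assumes "d \<ge> 2" "k \<in> moran_states d N"
  shows "(\<Sum>i\<in>{1..d}. ext_state d N k i) = N"
proof -
  have e: "{1..d} = insert d {1..d-1}" using assms by auto
  have "(\<Sum>i\<in>{1..d-1}. ext_state d N k i) = sum k {1..d-1}"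
    by (rule sum.cong) (auto simp: ext_low)
  then show ?thesis using assms unfolding e by (simp add: ext_d ms_iff)
qed

lemma dual_diag:
  assumes "d \<ge> 2" "k \<in> moran_states d N" "\<xi> \<in> moran_states d N"
  shows "moran_dual d N \<theta> k \<xi> = (if k = \<xi> then ww d N (2 * \<theta> / real (d - 1)) k else 0)"
proof (cases "k = \<xi>")
  case True
  then show ?thesis unfolding moran_dual_def Let_def ww_def
    by (simp add: phi_def falling_ratio_def)
next
  case False
  have "\<exists>i\<in>{1..d}. ext_state d N k i < ext_state d N \<xi> i"
  proof (rule ccontr)
    assume "\<not> ?thesis"
    hence le: "\<And>i. i \<in> {1..d} \<Longrightarrow> ext_state d N \<xi> i \<le> ext_state d N k i"
      using not_less by blast
    have eqs: "(\<Sum>i\<in>{1..d}. ext_state d N \<xi> i) = (\<Sum>i\<in>{1..d}. ext_state d N k i)"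
      using ext_sum[OF assms(1,2)] ext_sum[OF assms(1,3)] by simp
    have "k = \<xi>"
    proof
      fix i
      show "k i = \<xi> i"
      proof (cases "i \<in> {1..d-1}")
        case True
        hence "i \<in> {1..d}" by auto
        from sum_mono_inv[OF eqs le this] True show ?thesis by (simp add: ext_low)
      next
        case False
        then show ?thesis using assms(2,3) by (simp add: ms_iff)
      qed
    qed
    with False show False by simp
  qed
  then obtain i where i: "i \<in> {1..d}" "ext_state d N k i < ext_state d N \<xi> i" by blast
  have "moran_dual d N \<theta> k \<xi> = 0" unfolding moran_dual_def Let_def
    using i by (subst prod_zero_iff) (auto simp: falling_ratio_def intro!: bexI[of _ i])
  with False show ?thesis by simp
qed

lemma sum_mv1:
  fixes k :: "'a \<Rightarrow> nat"
  assumes "finite A" "i \<in> A" "j \<in> A" "i \<noteq> j" "k i \<noteq> 0"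
  shows "sum (k(i := k i - 1, j := k j + 1)) A = sum k A"
  using sum_upd[OF assms(1,3), of "k(i := k i - 1)" "k j + 1"] sum_upd[OF assms(1,2), of k "k i - 1"] assms(4,5)
  by simp

lemma sum_mv2:
  fixes k :: "'a \<Rightarrow> nat"
  assumes "finite A" "i \<in> A"
  shows "sum (k(i := k i + 1)) A = sum k A + 1"
  using sum_upd[OF assms, of k "k i + 1"] by simp

lemma sum_mv3:
  fixes k :: "'a \<Rightarrow> nat"
  assumes "finite A" "i \<in> A" "k i \<noteq> 0"
  shows "sum (k(i := k i - 1)) A + 1 = sum k A"
  using sum_upd[OF assms(1,2), of k "k i - 1"] assms(3) by simp

lemma mv1:
  assumes "k \<in> moran_states d N" "i \<in> {1..d-1}" "j \<in> {1..d-1}" "i \<noteq> j" "k i \<noteq> 0"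
  shows "k(i := k i - 1, j := k j + 1) \<in> moran_states d N"
  using assms sum_mv1[of "{1..d-1}" i j k] unfolding ms_iff by auto

lemma mv2:
  assumes "k \<in> moran_states d N" "i \<in> {1..d-1}" "sum k {1..d-1} < N"
  shows "k(i := k i + 1) \<in> moran_states d N"
  using assms sum_mv2[of "{1..d-1}" i k] unfolding ms_iff by auto

lemma mv3:
  assumes "k \<in> moran_states d N" "i \<in> {1..d-1}"
  shows "k(i := k i - 1) \<in> moran_states d N"
proof (cases "k i = 0")
  case True
  then have "k(i := k i - 1) = k" by auto
  then show ?thesis using assms by simp
next
  case False
  then show ?thesis using assms sum_mv3[of "{1..d-1}" i k] unfolding ms_iff by auto
qed

lemma gen_local:
  assumes fg: "\<forall>x\<in>moran_states d N. f x = g x" and k: "k \<in> moran_states d N"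
  shows "moran_gen d N \<theta> f k = moran_gen d N \<theta> g k"
proof -
  have fk: "f k = g k" using assms by auto
  have t1: "real (k i) * X * (f (k(i := k i - 1, j := k j + 1)) - f k)
          = real (k i) * X * (g (k(i := k i - 1, j := k j + 1)) - g k)"
    if "i\<in>{1..d-1}" "j\<in>{1..d-1}" "i\<noteq>j" for i j X
  proof (cases "k i = 0")
    case False
    then show ?thesis using mv1[OF k that False] fg fk by simp
  qed simp
  have t1': "real (k j) * X * (f (k(i := k i + 1, j := k j - 1)) - f k)
          = real (k j) * X * (g (k(i := k i + 1, j := k j - 1)) - g k)"
    if "i\<in>{1..d-1}" "j\<in>{1..d-1}" "i\<noteq>j" for i j X
    using t1[of j i X] that by (simp add: fun_upd_twist)
  have t2: "(real N - real (sum k {1..d-1})) * X * (f (k(i := k i + 1)) - f k)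
          = (real N - real (sum k {1..d-1})) * X * (g (k(i := k i + 1)) - g k)"
    if "i\<in>{1..d-1}" for i X
  proof (cases "sum k {1..d-1} < N")
    case True
    then show ?thesis using mv2[OF k that True] fg fk by simp
  next
    case False
    then have "sum k {1..d-1} = N" using k by (simp add: ms_iff)
    then show ?thesis by simp
  qed
  have t3: "real (k i) * X * (f (k(i := k i - 1)) - f k)
          = real (k i) * X * (g (k(i := k i - 1)) - g k)"
    if "i\<in>{1..d-1}" for i X
    using mv3[OF k that] fg fk by simp
  show ?thesis unfolding moran_gen_def Let_def
    apply (intro arg_cong2[where f="(+)"] arg_cong[where f="(*) (1/2)"] sum.cong refl)
       apply (rule t1; auto)
      apply (rule t1'; auto)
     apply (rule t2; auto)
    apply (rule t3; auto)
    done
qed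

lemma pow_local:
  assumes "\<forall>x\<in>moran_states d N. f x = g x"
  shows "\<forall>x\<in>moran_states d N. (moran_gen d N \<theta> ^^ n) f x = (moran_gen d N \<theta> ^^ n) g x"
  using assms by (induction n) (auto intro!: gen_local)

lemma lin_aux: "(c::real) * ((a + b) - (a' + b')) = c*(a - a') + c*(b - b')"
  by (simp add: algebra_simps)

lemma gen_add: "moran_gen d N \<theta> (\<lambda>x. f x + g x) k = moran_gen d N \<theta> f k + moran_gen d N \<theta> g k"
  unfolding moran_gen_def Let_def by (simp only: lin_aux sum.distrib distrib_left add_ac)

lemma scale_aux: "(c::real) * (a * x - a * y) = a * (c * (x - y))"
  by (simp add: algebra_simps)

lemma gen_scale: "moran_gen d N \<theta> (\<lambda>x. a * f x) k = a * moran_gen d N \<theta> f k"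
  unfolding moran_gen_def Let_def
  by (simp only: scale_aux flip: distrib_left sum_distrib_left)

lemma pow_add: "(moran_gen d N \<theta> ^^ n) (\<lambda>x. f x + g x) = (\<lambda>x. (moran_gen d N \<theta> ^^ n) f x + (moran_gen d N \<theta> ^^ n) g x)"
proof (induction n)
  case (Suc n)
  show ?case by (rule ext) (simp add: Suc gen_add)
qed simp

lemma pow_scale: "(moran_gen d N \<theta> ^^ n) (\<lambda>x. a * f x) = (\<lambda>x. a * (moran_gen d N \<theta> ^^ n) f x)"
proof (induction n)
  case (Suc n)
  show ?case by (rule ext) (simp add: Suc gen_scale)
qed simp

definition lin :: "(('a \<Rightarrow> real) \<Rightarrow> real) \<Rightarrow> bool" where
  "lin \<Phi> \<longleftrightarrow> (\<forall>f g. \<Phi> (\<lambda>x. f x + g x) = \<Phi> f + \<Phi> g) \<and> (\<forall>a f. \<Phi> (\<lambda>x. a * f x) = a * \<Phi> f)"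

lemma lin_add: "lin \<Phi> \<Longrightarrow> \<Phi> (\<lambda>x. f x + g x) = \<Phi> f + \<Phi> g"
  by (simp add: lin_def)

lemma lin_scale: "lin \<Phi> \<Longrightarrow> \<Phi> (\<lambda>x. a * f x) = a * \<Phi> f"
  by (simp add: lin_def)

lemma lin_zero: "lin \<Phi> \<Longrightarrow> \<Phi> (\<lambda>x. 0) = 0"
  using lin_scale[of \<Phi> 0 "\<lambda>x. 0"] by simp

lemma lin_diff: "lin \<Phi> \<Longrightarrow> \<Phi> (\<lambda>x. f x - g x) = \<Phi> f - \<Phi> g"
proof -
  assume l: "lin \<Phi>"
  have "(\<lambda>x. f x - g x) = (\<lambda>x. f x + (-1) * g x)" by auto
  then show ?thesis using lin_add[OF l, of f "\<lambda>x. (-1) * g x"] lin_scale[OF l, of "-1" g] by simp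
qed

lemma lin_sum: "lin \<Phi> \<Longrightarrow> \<Phi> (\<lambda>x. \<Sum>i\<in>I. f i x) = (\<Sum>i\<in>I. \<Phi> (f i))"
proof (induction I rule: infinite_finite_induct)
  case (infinite A)
  then show ?case using lin_zero by simp
next
  case empty
  then show ?case using lin_zero by simp
next
  case (insert i A)
  then show ?case using lin_add[OF insert(4), of "f i" "\<lambda>x. \<Sum>i\<in>A. f i x"] by simp
qed

lemma lin_pow: "lin (\<lambda>h. (moran_gen d N \<theta> ^^ n) h z)"
  unfolding lin_def by (simp add: pow_add pow_scale)

lemma gen_swap:
  assumes "lin \<Phi>"
  shows "moran_gen d N \<theta> (\<lambda>y. \<Phi> (\<lambda>x. H x y)) z = \<Phi> (\<lambda>x. moran_gen d N \<theta> (\<lambda>y. H x y) z)"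
  unfolding moran_gen_def Let_def
  by (simp only: lin_add[OF assms] lin_scale[OF assms] lin_sum[OF assms] lin_diff[OF assms])

definition hh :: "nat \<Rightarrow> nat \<Rightarrow> real \<Rightarrow> (nat \<Rightarrow> nat) \<Rightarrow> (nat \<Rightarrow> nat) \<Rightarrow> real" where
  "hh d N c \<xi> x = (if x = \<xi> then ww d N c \<xi> else 0)"

lemma T1:
  assumes d: "d \<ge> 2" and c: "c > 0" and k: "k \<in> moran_states d N" and xi: "\<xi> \<in> moran_states d N"
    and ne: "k \<noteq> \<xi>" and ij: "i \<in> {1..d-1}" "j \<in> {1..d-1}" "i \<noteq> j"
  shows "real (k i) * (real (k j) + c) * hh d N c \<xi> (k(i := k i - 1, j := k j + 1))
       = real (\<xi> j) * (real (\<xi> i) + c) * hh d N c k (\<xi>(j := \<xi> j - 1, i := \<xi> i + 1))"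
proof (cases "\<xi> = k(i := k i - 1, j := k j + 1)")
  case True
  note xe = True
  show ?thesis
  proof (cases "k i = 0")
    case True
    have "\<xi>(j := \<xi> j - 1, i := \<xi> i + 1) \<noteq> k"
    proof
      assume "\<xi>(j := \<xi> j - 1, i := \<xi> i + 1) = k"
      then have "(\<xi>(j := \<xi> j - 1, i := \<xi> i + 1)) i = k i" by simp
      with True show False by simp
    qed
    with True show ?thesis by (simp add: hh_def)
  next
    case False
    have bk: "\<xi>(j := \<xi> j - 1, i := \<xi> i + 1) = k"
      using xe False ij by (auto simp: fun_eq_iff)
    have sx: "sum \<xi> {1..d-1} = sum k {1..d-1}"
      using xe sum_mv1[of "{1..d-1}" i j k] False ij by simp
    have sw: "real (ext_state d N k i) * (real (ext_state d N k j) + c) * (\<Prod>l\<in>{1..d}. phi c (ext_state d N \<xi> l))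
       = real (ext_state d N \<xi> j) * (real (ext_state d N \<xi> i) + c) * (\<Prod>l\<in>{1..d}. phi c (ext_state d N k l))"
    proof (rule w_swap)
      show "ext_state d N \<xi> i + 1 = ext_state d N k i"
        using ij False xe by (simp add: ext_low)
      show "ext_state d N \<xi> j = ext_state d N k j + 1"
        using ij xe by (simp add: ext_low)
      show "\<forall>l\<in>{1..d}-{i,j}. ext_state d N \<xi> l = ext_state d N k l"
      proof
        fix l assume l: "l \<in> {1..d}-{i,j}"
        show "ext_state d N \<xi> l = ext_state d N k l"
        proof (cases "l = d")
          case True
          then show ?thesis using sx by (simp add: ext_d)
        next
          case False
          then have "l \<in> {1..d-1}" using l by auto
          then show ?thesis using l xe by (simp add: ext_low)
        qed
      qed
    qed (use ij c in auto)
    have "ww d N c \<xi> = (\<Prod>l\<in>{1..d}. phi c (ext_state d N \<xi> l))" "ww d N c k = (\<Prod>l\<in>{1..d}. phi c (ext_state d N k l))"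
      by (simp_all add: ww_def)
    then show ?thesis using sw bk xe[symmetric] ij by (simp add: hh_def ext_low)
  qed
next
  case False
  note nx = False
  have "real (\<xi> j) * (real (\<xi> i) + c) * hh d N c k (\<xi>(j := \<xi> j - 1, i := \<xi> i + 1)) = 0"
  proof (cases "\<xi>(j := \<xi> j - 1, i := \<xi> i + 1) = k")
    case True
    note ye = True
    show ?thesis
    proof (cases "\<xi> j = 0")
      case False
      have "\<xi> = k(i := k i - 1, j := k j + 1)"
        using ye[symmetric] False ij by (auto simp: fun_eq_iff)
      with nx show ?thesis by simp
    qed simp
  qed (simp add: hh_def)
  moreover have "hh d N c \<xi> (k(i := k i - 1, j := k j + 1)) = 0" using False by (auto simp: hh_def)
  ultimately show ?thesis by simp
qed

lemma T2:
  assumes d: "d \<ge> 2" and c: "c > 0" and k: "k \<in> moran_states d N" and xi: "\<xi> \<in> moran_states d N"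
    and ne: "k \<noteq> \<xi>" and i: "i \<in> {1..d-1}"
  shows "(real N - real (sum k {1..d-1})) * (real (k i) + c) * hh d N c \<xi> (k(i := k i + 1))
       = real (\<xi> i) * (real N - real (sum \<xi> {1..d-1}) + c) * hh d N c k (\<xi>(i := \<xi> i - 1))"
proof (cases "\<xi> = k(i := k i + 1)")
  case True
  note xe = True
  have bk: "\<xi>(i := \<xi> i - 1) = k" using xe by (auto simp: fun_eq_iff)
  have sx: "sum \<xi> {1..d-1} = sum k {1..d-1} + 1"
    using xe sum_mv2[of "{1..d-1}" i k] i by simp
  have sle: "sum \<xi> {1..d-1} \<le> N" using xi by (simp add: ms_iff)
  have id: "i \<noteq> d" "d \<in> {1..d}" "i \<in> {1..d}" using i d by auto
  have sw: "real (ext_state d N k d) * (real (ext_state d N k i) + c) * (\<Prod>l\<in>{1..d}. phi c (ext_state d N \<xi> l))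
     = real (ext_state d N \<xi> i) * (real (ext_state d N \<xi> d) + c) * (\<Prod>l\<in>{1..d}. phi c (ext_state d N k l))"
  proof (rule w_swap)
    show "ext_state d N \<xi> d + 1 = ext_state d N k d"
      using sx sle by (simp add: ext_d)
    show "ext_state d N \<xi> i = ext_state d N k i + 1"
      using i xe by (simp add: ext_low)
    show "\<forall>l\<in>{1..d}-{d,i}. ext_state d N \<xi> l = ext_state d N k l"
    proof
      fix l assume l: "l \<in> {1..d}-{d,i}"
      then have "l \<in> {1..d-1}" by auto
      then show "ext_state d N \<xi> l = ext_state d N k l" using l xe by (simp add: ext_low)
    qed
  qed (use id c in auto)
  have r1: "real N - real (sum k {1..d-1}) = real (ext_state d N k d)"
    using sx sle by (simp add: ext_d of_nat_diff)
  have r2: "real N - real (sum \<xi> {1..d-1}) = real (ext_state d N \<xi> d)"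
    using sle by (simp add: ext_d of_nat_diff)
  have "ww d N c \<xi> = (\<Prod>l\<in>{1..d}. phi c (ext_state d N \<xi> l))" "ww d N c k = (\<Prod>l\<in>{1..d}. phi c (ext_state d N k l))"
    by (simp_all add: ww_def)
  then show ?thesis unfolding r1 r2 using sw bk xe[symmetric] i by (simp add: hh_def ext_low)
next
  case False
  note nx = False
  have "real (\<xi> i) * (real N - real (sum \<xi> {1..d-1}) + c) * hh d N c k (\<xi>(i := \<xi> i - 1)) = 0"
  proof (cases "\<xi>(i := \<xi> i - 1) = k")
    case True
    note ye = True
    show ?thesis
    proof (cases "\<xi> i = 0")
      case False
      have "\<xi> = k(i := k i + 1)"
        using ye[symmetric] False by (auto simp: fun_eq_iff)
      with nx show ?thesis by simp
    qed simp
  qed (simp add: hh_def)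
  moreover have "hh d N c \<xi> (k(i := k i + 1)) = 0" using False by (auto simp: hh_def)
  ultimately show ?thesis by simp
qed

lemma hh_dual:
  assumes d: "d \<ge> 2" and th: "\<theta> > 0" and k: "k \<in> moran_states d N" and xi: "\<xi> \<in> moran_states d N"
  defines "c0 \<equiv> 2 * \<theta> / real (d - 1)"
  shows "moran_gen d N \<theta> (hh d N c0 \<xi>) k = moran_gen d N \<theta> (hh d N c0 k) \<xi>"
proof (cases "k = \<xi>")
  case False
  have c: "c0 > 0" using d th by (simp add: c0_def)
  have z1: "hh d N c0 \<xi> k = 0" "hh d N c0 k \<xi> = 0" using False by (auto simp: hh_def)
  have P: "real (k i) * (real (k j) + c0) * (hh d N c0 \<xi> (k(i := k i - 1, j := k j + 1)) - hh d N c0 \<xi> k)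
       + real (k j) * (real (k i) + c0) * (hh d N c0 \<xi> (k(i := k i + 1, j := k j - 1)) - hh d N c0 \<xi> k)
     = real (\<xi> i) * (real (\<xi> j) + c0) * (hh d N c0 k (\<xi>(i := \<xi> i - 1, j := \<xi> j + 1)) - hh d N c0 k \<xi>)
       + real (\<xi> j) * (real (\<xi> i) + c0) * (hh d N c0 k (\<xi>(i := \<xi> i + 1, j := \<xi> j - 1)) - hh d N c0 k \<xi>)"
    if "i \<in> {1..d-1}" "j \<in> {i+1..d-1}" for i j
  proof -
    have ij: "i \<in> {1..d-1}" "j \<in> {1..d-1}" "i \<noteq> j" using that by auto
    have a: "real (k i) * (real (k j) + c0) * hh d N c0 \<xi> (k(i := k i - 1, j := k j + 1))
       = real (\<xi> j) * (real (\<xi> i) + c0) * hh d N c0 k (\<xi>(i := \<xi> i + 1, j := \<xi> j - 1))"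
      using T1[OF d c k xi False ij] ij(3) by (simp add: fun_upd_twist)
    have b: "real (\<xi> i) * (real (\<xi> j) + c0) * hh d N c0 k (\<xi>(i := \<xi> i - 1, j := \<xi> j + 1))
       = real (k j) * (real (k i) + c0) * hh d N c0 \<xi> (k(i := k i + 1, j := k j - 1))"
      using T1[OF d c xi k _ ij] False ij(3) by (simp add: fun_upd_twist)
    show ?thesis using a b z1 by simp
  qed
  have Q: "(real N - real (sum k {1..d-1})) * (real (k i) + c0) * (hh d N c0 \<xi> (k(i := k i + 1)) - hh d N c0 \<xi> k)
       + real (k i) * (real N - real (sum k {1..d-1}) + c0) * (hh d N c0 \<xi> (k(i := k i - 1)) - hh d N c0 \<xi> k)
     = (real N - real (sum \<xi> {1..d-1})) * (real (\<xi> i) + c0) * (hh d N c0 k (\<xi>(i := \<xi> i + 1)) - hh d N c0 k \<xi>)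
       + real (\<xi> i) * (real N - real (sum \<xi> {1..d-1}) + c0) * (hh d N c0 k (\<xi>(i := \<xi> i - 1)) - hh d N c0 k \<xi>)"
    if "i \<in> {1..d-1}" for i
    using T2[OF d c k xi False that] T2[OF d c xi k _ that] False z1 by simp
  show ?thesis unfolding moran_gen_def Let_def c0_def[symmetric]
    apply (rule arg_cong2[where f="(+)"])
     apply (rule arg_cong[where f="(*) (1/2)"])
     apply (rule sum.cong[OF refl])
     apply (rule sum.cong[OF refl])
     apply (rule P; assumption)
    apply (rule arg_cong[where f="(*) (1/2)"])
    apply (rule sum.cong[OF refl])
    apply (rule Q; assumption)
    done
qed simp

lemma gen_dual:
  assumes d: "d \<ge> 2" and th: "\<theta> > 0" and k: "k \<in> moran_states d N" and xi: "\<xi> \<in> moran_states d N"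
  shows "moran_gen d N \<theta> (\<lambda>k'. moran_dual d N \<theta> k' \<xi>) k = moran_gen d N \<theta> (\<lambda>\<xi>'. moran_dual d N \<theta> k \<xi>') \<xi>"
proof -
  define c0 where "c0 = 2 * \<theta> / real (d - 1)"
  have "moran_gen d N \<theta> (\<lambda>k'. moran_dual d N \<theta> k' \<xi>) k = moran_gen d N \<theta> (hh d N c0 \<xi>) k"
    by (rule gen_local[OF _ k]) (auto simp: dual_diag[OF d _ xi] hh_def c0_def)
  also have "\<dots> = moran_gen d N \<theta> (hh d N c0 k) \<xi>" unfolding c0_def by (rule hh_dual[OF d th k xi])
  also have "\<dots> = moran_gen d N \<theta> (\<lambda>\<xi>'. moran_dual d N \<theta> k \<xi>') \<xi>"
    by (rule gen_local[OF _ xi]) (auto simp: dual_diag[OF d k] hh_def c0_def)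
  finally show ?thesis .
qed

lemma pow_dual:
  assumes d: "d \<ge> 2" and th: "\<theta> > 0"
  shows "\<forall>k\<in>moran_states d N. \<forall>\<xi>\<in>moran_states d N.
    (moran_gen d N \<theta> ^^ n) (\<lambda>k'. moran_dual d N \<theta> k' \<xi>) k = (moran_gen d N \<theta> ^^ n) (\<lambda>\<xi>'. moran_dual d N \<theta> k \<xi>') \<xi>"
proof (induction n)
  case 0
  then show ?case by simp
next
  case (Suc n)
  let ?L = "moran_gen d N \<theta>"
  let ?D = "moran_dual d N \<theta>"
  show ?case
  proof (intro ballI)
    fix k \<xi> assume k: "k \<in> moran_states d N" and xi: "\<xi> \<in> moran_states d N"
    have "(?L ^^ Suc n) (\<lambda>k'. ?D k' \<xi>) k = (?L ^^ n) (?L (\<lambda>k'. ?D k' \<xi>)) k"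
      by (simp only: funpow_Suc_right o_apply)
    also have "\<dots> = (?L ^^ n) (\<lambda>k'. ?L (\<lambda>\<xi>'. ?D k' \<xi>') \<xi>) k"
      using pow_local[where d=d and N=N and f="?L (\<lambda>k'. ?D k' \<xi>)" and g="\<lambda>k'. ?L (\<lambda>\<xi>'. ?D k' \<xi>') \<xi>" and \<theta>=\<theta> and n=n] gen_dual[OF d th _ xi] k
      by blast
    also have "\<dots> = ?L (\<lambda>\<xi>'. (?L ^^ n) (\<lambda>k'. ?D k' \<xi>') k) \<xi>"
      using gen_swap[OF lin_pow[where d=d and N=N and \<theta>=\<theta> and n=n and z=k], where H="?D" and z=\<xi>] by simp
    also have "\<dots> = ?L (\<lambda>\<xi>'. (?L ^^ n) (\<lambda>\<xi>''. ?D k \<xi>'') \<xi>') \<xi>"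
      by (rule gen_local[OF _ xi]) (use Suc k in blast)
    also have "\<dots> = (?L ^^ Suc n) (\<lambda>\<xi>'. ?D k \<xi>') \<xi>" by simp
    finally show "(?L ^^ Suc n) (\<lambda>k'. ?D k' \<xi>) k = (?L ^^ Suc n) (\<lambda>\<xi>'. ?D k \<xi>') \<xi>" .
  qed
qed

theorem theorem5p2:
  fixes d N :: nat and \<theta> t :: real and k \<xi> :: "nat \<Rightarrow> nat"
  assumes "d \<ge> 2" and "\<theta> > 0"
    and "k \<in> moran_states d N" and "\<xi> \<in> moran_states d N"
    and "t > 0"
  shows "moran_expect d N \<theta> t (\<lambda>k'. moran_dual d N \<theta> k' \<xi>) k
       = moran_expect d N \<theta> t (\<lambda>\<xi>'. moran_dual d N \<theta> k \<xi>') \<xi>"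
  unfolding moran_expect_def using pow_dual[OF assms(1,2)] assms(3,4) by simp

end
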